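(* Let $R_4=\{a_1,a_2,b_1,b_2\}$ be the topological quandle with operations $a_i\triangleright a_j=a_i$, $b_i\triangleright b_j=b_i$, $a_i\triangleright b_j=a_{i+1}$, $b_i\triangleright a_j=b_{i+1}$, where subscripts are taken mod 2 so that $2+1$ means $1$. (This is the dihedral quandle of four elements.) Give $R_4$ the topology $\{\emptyset,\{a_1,a_2\},\{b_1,b_2\},R_4\}$. Then the first cohomology group $\bar{H}^{1}_{Q}(R_{4})=\mathbb{Z}^{4}$.
   Context: Setting: For a topological quandle $X$, $C_n(X)$ is the free abelian group generated by the singular $n$-simplices $\sigma:\Delta^n\to X$. We write $\sigma_{[x_1,\dots,x_{n+1}]}$ for a simplex whose $i$-th vertex maps to $x_i$. The boundary map is $\partial_n(\sigma_{[x_1,\dots,x_{n+1}]})=\sum_{i=2}^{n+1}(-1)^i(\sigma_{[x_1,\dots,\hat{x_i},\dots,x_{n+1}]}-\sigma_{[x_1\triangleright x_i,\dots,x_{i-1}\triangleright x_i,\hat{x_i},\dots,x_{n+1}]})$. $\bar{C}^R_n(X)$ is the quotient of $C_n(X)$ that identifies two $n$-simplices whenever they have the same vertices. $\bar{C}^D_n(X)$ is the subcomplex generated by the simplices $\sigma_{[x_1,\dots,x_{n+1}]}$ with $x_i=x_{i+1}$ for some $i$, for $n\ge1$; it is $0$ for $n=0$. Then $\bar{C}^Q_n(X)=\bar{C}^R_n(X)/\bar{C}^D_n(X)$. The group $\bar{H}^n_Q(X)$ is the $n$-th cohomology of $\mathrm{Hom}(\bar{C}^Q_*(X),\mathbb{Z})$.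 *)

theory Defs
  imports "HOL-Homology.Homology" "HOL-Algebra.Free_Abelian_Groups"
begin

definition simplex_vertex :: "nat \<Rightarrow> (nat \<Rightarrow> real)" where
  "simplex_vertex i = (\<lambda>j. if j = i then 1 else 0)"

definition vertex_tuple :: "nat \<Rightarrow> ((nat \<Rightarrow> real) \<Rightarrow> 'a) \<Rightarrow> 'a list" where
  "vertex_tuple n \<sigma> = map (\<lambda>i. \<sigma> (simplex_vertex i)) [0..<Suc n]"

text \<open>Generators of the quotient of C_n(X) identifying simplices with the same vertices:
  the vertex tuples of singular n-simplices.\<close>
definition RGen :: "nat \<Rightarrow> 'a topology \<Rightarrow> 'a list set" where
  "RGen n X = {vertex_tuple n \<sigma> | \<sigma>. singular_simplex n X \<sigma>}"

definition degenerate_tuple :: "'a list \<Rightarrow> bool" where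
  "degenerate_tuple xs \<longleftrightarrow> (\<exists>i. Suc i < length xs \<and> xs ! i = xs ! Suc i)"

definition QGen :: "nat \<Rightarrow> 'a topology \<Rightarrow> 'a list set" where
  "QGen n X = {xs \<in> RGen n X. \<not> degenerate_tuple xs}"

text \<open>Hom of the free abelian group on QGen n X into Z = integer functions on the basis
  (extended by 0 outside).\<close>
definition QCochain :: "nat \<Rightarrow> 'a topology \<Rightarrow> ('a list \<Rightarrow> int) set" where
  "QCochain n X = {f. \<forall>xs. xs \<notin> QGen n X \<longrightarrow> f xs = 0}"

text \<open>Coboundary delta^n f = f o boundary_{n+1}, with the boundary map of the paper
  (paper index i = 2..n+2 corresponds to 0-based j = i-1 = 1..n+1).\<close>
definition qcobd :: "nat \<Rightarrow> 'a topology \<Rightarrow> ('a \<Rightarrow> 'a \<Rightarrow> 'a) \<Rightarrow> ('a list \<Rightarrow> int) \<Rightarrow> ('a list \<Rightarrow> int)" where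
  "qcobd n X op f = (\<lambda>xs. if xs \<in> QGen (Suc n) X then
      (\<Sum>j\<in>{1..Suc n}. (-1) ^ (Suc j) *
         (f (take j xs @ drop (Suc j) xs)
          - f (map (\<lambda>x. op x (xs ! j)) (take j xs) @ drop (Suc j) xs)))
     else 0)"

definition QCocycles :: "nat \<Rightarrow> 'a topology \<Rightarrow> ('a \<Rightarrow> 'a \<Rightarrow> 'a) \<Rightarrow> ('a list \<Rightarrow> int) set" where
  "QCocycles n X op = {f \<in> QCochain n X. qcobd n X op f = (\<lambda>_. 0)}"

definition QCoboundaries :: "nat \<Rightarrow> 'a topology \<Rightarrow> ('a \<Rightarrow> 'a \<Rightarrow> 'a) \<Rightarrow> ('a list \<Rightarrow> int) set" where
  "QCoboundaries n X op =
     (if n = 0 then {\<lambda>_. 0} else qcobd (n - 1) X op ` QCochain (n - 1) X)"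

definition cocycle_group :: "nat \<Rightarrow> 'a topology \<Rightarrow> ('a \<Rightarrow> 'a \<Rightarrow> 'a) \<Rightarrow> ('a list \<Rightarrow> int) monoid" where
  "cocycle_group n X op = \<lparr>carrier = QCocycles n X op, monoid.mult = (\<lambda>f g xs. f xs + g xs),
                           one = (\<lambda>_. 0)\<rparr>"

definition quandle_cohomology :: "nat \<Rightarrow> 'a topology \<Rightarrow> ('a \<Rightarrow> 'a \<Rightarrow> 'a) \<Rightarrow> ('a list \<Rightarrow> int) set monoid" where
  "quandle_cohomology n X op = cocycle_group n X op Mod QCoboundaries n X op"

datatype r4 = A1 | A2 | B1 | B2

fun r4_op :: "r4 \<Rightarrow> r4 \<Rightarrow> r4" where
  "r4_op A1 A1 = A1" | "r4_op A1 A2 = A1" | "r4_op A2 A1 = A2" | "r4_op A2 A2 = A2"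
| "r4_op B1 B1 = B1" | "r4_op B1 B2 = B1" | "r4_op B2 B1 = B2" | "r4_op B2 B2 = B2"
| "r4_op A1 B1 = A2" | "r4_op A1 B2 = A2" | "r4_op A2 B1 = A1" | "r4_op A2 B2 = A1"
| "r4_op B1 A1 = B2" | "r4_op B1 A2 = B2" | "r4_op B2 A1 = B1" | "r4_op B2 A2 = B1"

definition R4_top :: "r4 topology" where
  "R4_top = topology (\<lambda>U. U \<in> {{}, {A1, A2}, {B1, B2}, UNIV})"

end

theory Submission imports Defs "HOL-Analysis.Abstract_Topological_Spaces" begin

lemma UNIV_r4: "(UNIV::r4 set) = {A1,A2,B1,B2}"
  using r4.exhaust by blast

lemma fam_iff: "U \<in> {{}, {A1, A2}, {B1, B2}, (UNIV::r4 set)} \<longleftrightarrow> (A1\<in>U \<longleftrightarrow> A2\<in>U) \<and> (B1\<in>U \<longleftrightarrow> B2\<in>U)"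
proof
  assume "U \<in> {{}, {A1, A2}, {B1, B2}, (UNIV::r4 set)}"
  then show "(A1\<in>U \<longleftrightarrow> A2\<in>U) \<and> (B1\<in>U \<longleftrightarrow> B2\<in>U)" by (elim insertE emptyE; simp)
next
  have u: "{A1,A2} \<union> {B1,B2} = (UNIV::r4 set)" by (auto simp: UNIV_r4)
  assume a: "(A1\<in>U \<longleftrightarrow> A2\<in>U) \<and> (B1\<in>U \<longleftrightarrow> B2\<in>U)"
  have "U = (if A1 \<in> U then {A1,A2} else {}) \<union> (if B1 \<in> U then {B1,B2} else {})"
    apply (rule Set.set_eqI)
    subgoal for x using a by (cases x; cases "A1 \<in> U"; cases "B1 \<in> U"; simp)
    done
  then show "U \<in> {{}, {A1, A2}, {B1, B2}, (UNIV::r4 set)}"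
    using u by (cases "A1 \<in> U"; cases "B1 \<in> U"; simp only: if_True if_False Un_empty_left Un_empty_right; simp)
qed

lemma istop_R4: "istopology (\<lambda>U. U \<in> {{}, {A1, A2}, {B1, B2}, (UNIV::r4 set)})"
  unfolding istopology_def
  apply (intro conjI allI impI)
  subgoal for S T by (elim insertE emptyE; simp)
  subgoal for K unfolding fam_iff by blast
  done

lemma openin_R4: "openin R4_top U \<longleftrightarrow> U \<in> {{}, {A1, A2}, {B1, B2}, UNIV}"
  unfolding R4_top_def using istop_R4 by simp

lemma topspace_R4 [simp]: "topspace R4_top = UNIV"
  unfolding topspace_def openin_R4 by auto

definition blk :: "r4 \<Rightarrow> bool" where "blk x \<longleftrightarrow> x = A1 \<or> x = A2"

lemma op_same: "blk x = blk y \<Longrightarrow> r4_op x y = x"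
  by (cases x; cases y; simp add: blk_def)

lemma blk_set: "{x. blk x} = {A1,A2}" by (auto simp: blk_def)

lemma simplex_vertex_in: "i \<le> n \<Longrightarrow> simplex_vertex i \<in> standard_simplex n"
  unfolding simplex_vertex_def standard_simplex_def by auto

lemma RGen_blk:
  assumes "xs \<in> RGen n R4_top"
  shows "length xs = Suc n \<and> (\<forall>x\<in>set xs. \<forall>y\<in>set xs. blk x = blk y)"
proof -
  obtain \<sigma> where s: "singular_simplex n R4_top \<sigma>" and xs: "xs = vertex_tuple n \<sigma>"
    using assms unfolding RGen_def by auto
  have c: "continuous_map (subtopology (powertop_real UNIV) (standard_simplex n)) R4_top \<sigma>"
    using s unfolding singular_simplex_def by auto
  have "connectedin (subtopology (powertop_real UNIV) (standard_simplex n)) (standard_simplex n)"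
    by (simp add: connectedin_subtopology connectedin_standard_simplex)
  then have con: "connectedin R4_top (\<sigma> ` standard_simplex n)"
    using connectedin_continuous_map_image[OF c] by blast
  have op: "openin R4_top {A1,A2}" by (simp add: openin_R4)
  have cl: "closedin R4_top {A1,A2}"
    unfolding closedin_def by (simp add: openin_R4 UNIV_r4 insert_Diff_if)
  have "\<sigma> ` standard_simplex n \<subseteq> {A1,A2} \<or> disjnt (\<sigma> ` standard_simplex n) {A1,A2}"
    using connectedin_clopen_cases[OF con cl op] .
  then have "\<forall>p\<in>standard_simplex n. \<forall>q\<in>standard_simplex n. blk (\<sigma> p) = blk (\<sigma> q)"
    by (elim disjE) (force simp: blk_def disjnt_def)+
  then show ?thesis unfolding xs vertex_tuple_def
    by (auto simp: simplex_vertex_in)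
qed

definition L :: "nat \<Rightarrow> r4 list" where
  "L i = (if i = 0 then [A1,A2] else if i = 1 then [A2,A1] else if i = 2 then [B1,B2] else [B2,B1])"

lemma Lmem: "[A1,A2] \<in> L ` {..<4}" "[A2,A1] \<in> L ` {..<4}" "[B1,B2] \<in> L ` {..<4}" "[B2,B1] \<in> L ` {..<4}"
proof -
  have "L 0 = [A1,A2]" "L 1 = [A2,A1]" "L 2 = [B1,B2]" "L 3 = [B2,B1]" by (simp_all add: L_def)
  moreover have "(0::nat) < 4" "(1::nat) < 4" "(2::nat) < 4" "(3::nat) < 4" by simp_all
  ultimately show "[A1,A2] \<in> L ` {..<4}" "[A2,A1] \<in> L ` {..<4}" "[B1,B2] \<in> L ` {..<4}" "[B2,B1] \<in> L ` {..<4}"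
    by (metis imageI lessThan_iff)+
qed

lemma blk_U: "U \<in> {{}, {A1, A2}, {B1, B2}, UNIV} \<Longrightarrow> blk x = blk y \<Longrightarrow> x \<in> U \<Longrightarrow> y \<in> U"
  unfolding blk_def by (elim insertE emptyE; cases x; cases y; simp)

lemma edge_in_RGen:
  assumes "blk x = blk y" shows "[x,y] \<in> RGen 1 R4_top"
proof -
  define \<sigma> where "\<sigma> = (\<lambda>p. if p \<in> standard_simplex 1 then (if p 0 = 1 then x else y) else undefined)"
  have img: "\<sigma> p \<in> {x,y}" if "p \<in> standard_simplex 1" for p using that by (simp add: \<sigma>_def)
  have T: "topspace (subtopology (powertop_real UNIV) (standard_simplex 1)) = standard_simplex 1"
    by simp
  have "continuous_map (subtopology (powertop_real UNIV) (standard_simplex 1)) R4_top \<sigma>"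
    unfolding continuous_map_def T
  proof (intro conjI allI impI)
    show "\<sigma> \<in> standard_simplex 1 \<rightarrow> topspace R4_top" by simp
    fix U assume "openin R4_top U"
    then have U: "U \<in> {{}, {A1, A2}, {B1, B2}, UNIV}" by (simp add: openin_R4)
    have "{p \<in> standard_simplex 1. \<sigma> p \<in> U} = {} \<or> {p \<in> standard_simplex 1. \<sigma> p \<in> U} = standard_simplex 1"
    proof (cases "x \<in> U")
      case True
      then have "y \<in> U" using U assms blk_U by blast
      then have "{p \<in> standard_simplex 1. \<sigma> p \<in> U} = standard_simplex 1" using True img by blast
      then show ?thesis ..
    next
      case False
      then have "y \<notin> U" using U assms blk_U by blast
      then have "{p \<in> standard_simplex 1. \<sigma> p \<in> U} = {}" using False img by blast
      then show ?thesis ..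
    qed
    then show "openin (subtopology (powertop_real UNIV) (standard_simplex 1)) {p \<in> standard_simplex 1. \<sigma> p \<in> U}"
    proof
      assume e: "{p \<in> standard_simplex 1. \<sigma> p \<in> U} = {}"
      show ?thesis unfolding e by simp
    next
      assume e: "{p \<in> standard_simplex 1. \<sigma> p \<in> U} = standard_simplex 1"
      show ?thesis unfolding e using openin_topspace[of "subtopology (powertop_real UNIV) (standard_simplex 1)"] T
        by metis
    qed
  qed
  moreover have "\<sigma> \<in> extensional (standard_simplex 1)" by (simp add: \<sigma>_def extensional_def)
  ultimately have ss: "singular_simplex 1 R4_top \<sigma>" by (simp add: singular_simplex_def)
  have v0: "\<sigma> (simplex_vertex 0) = x"
    using simplex_vertex_in[of 0 1] unfolding \<sigma>_def by (simp add: simplex_vertex_def)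
  have v1: "\<sigma> (simplex_vertex 1) = y"
  proof -
    have "simplex_vertex 1 \<in> standard_simplex 1" by (rule simplex_vertex_in) simp
    moreover have "simplex_vertex 1 0 \<noteq> (1::real)" by (simp add: simplex_vertex_def)
    ultimately show ?thesis unfolding \<sigma>_def by presburger
  qed
  have vt: "vertex_tuple 1 \<sigma> = [x,y]"
  proof -
    have u: "[0..<Suc 1] = [0,1]" by simp
    show ?thesis unfolding vertex_tuple_def u by (simp only: list.map v0 v1)
  qed
  then show ?thesis unfolding RGen_def
    by (intro CollectI exI[of _ \<sigma>] conjI) (rule vt[symmetric], rule ss)
qed

lemma len2: "length xs = Suc (Suc 0) \<Longrightarrow> \<exists>x y. xs = [x,y]"
  by (cases xs; cases "tl xs"; simp)

lemma pair_in_L: "x \<noteq> y \<Longrightarrow> blk x = blk y \<Longrightarrow> [x,y] \<in> L ` {..<4}"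
  by (cases x; cases y; simp only: blk_def Lmem r4.distinct r4.simps simp_thms; simp)

lemma QGen1: "QGen 1 R4_top = L ` {..<4}"
proof
  show "QGen 1 R4_top \<subseteq> L ` {..<4}"
  proof
    fix xs assume a: "xs \<in> QGen 1 R4_top"
    then have rg: "xs \<in> RGen 1 R4_top" and nd: "\<not> degenerate_tuple xs"
      unfolding QGen_def by blast+
    have r: "length xs = Suc 1 \<and> (\<forall>x\<in>set xs. \<forall>y\<in>set xs. blk x = blk y)"
      using RGen_blk[OF rg] .
    then obtain x y where xs: "xs = [x,y]" using len2[of xs] by auto
    have "x \<noteq> y" using nd unfolding xs degenerate_tuple_def by auto
    moreover have "x \<in> set xs" "y \<in> set xs" using xs by auto
    ultimately have "x \<noteq> y" "blk x = blk y" using r by blast+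
    then show "xs \<in> L ` {..<4}" unfolding xs by (rule pair_in_L)
  qed
next
  show "L ` {..<4} \<subseteq> QGen 1 R4_top"
  proof
    fix xs assume "xs \<in> L ` {..<(4::nat)}"
    then obtain i where "i < (4::nat)" "xs = L i" by auto
    moreover have "i = 0 \<or> i = 1 \<or> i = 2 \<or> i = 3" using \<open>i < 4\<close> by arith
    ultimately have *: "xs = [A1,A2] \<or> xs = [A2,A1] \<or> xs = [B1,B2] \<or> xs = [B2,B1]"
      by (elim disjE; simp add: L_def)
    then show "xs \<in> QGen 1 R4_top"
      unfolding QGen_def degenerate_tuple_def
    proof (intro CollectI conjI)
      have e: "[A1,A2] \<in> RGen 1 R4_top" "[A2,A1] \<in> RGen 1 R4_top" "[B1,B2] \<in> RGen 1 R4_top" "[B2,B1] \<in> RGen 1 R4_top"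
        by (rule edge_in_RGen; simp add: blk_def)+
      show "xs \<in> RGen 1 R4_top" using * e by blast
      have l: "length xs = 2" using * by auto
      have "xs ! 0 \<noteq> xs ! 1" using * by auto
      then show "\<not> (\<exists>i. Suc i < length xs \<and> xs ! i = xs ! Suc i)"
        using l by (metis One_nat_def Suc_lessD less_2_cases_iff not_less_eq)
    qed
  qed
qed



lemma same_blk_map:
  assumes "\<forall>x\<in>set xs. \<forall>y\<in>set xs. blk x = blk y" "j < length xs"
  shows "map (\<lambda>x. r4_op x (xs!j)) (take j xs) = take j xs"
proof (rule map_idI)
  fix x assume "x \<in> set (take j xs)"
  then have "x \<in> set xs" by (meson in_set_takeD)
  moreover have "xs ! j \<in> set xs" using assms(2) by simp
  ultimately show "r4_op x (xs!j) = x" using assms(1) op_same by blast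
qed

lemma cocycles1: "QCocycles 1 R4_top r4_op = QCochain 1 R4_top"
proof -
  have "qcobd 1 R4_top r4_op f = (\<lambda>_. 0)" for f
  proof
    fix xs
    show "qcobd 1 R4_top r4_op f xs = 0"
    proof (cases "xs \<in> QGen (Suc 1) R4_top")
      case True
      then have r: "length xs = Suc (Suc 1) \<and> (\<forall>x\<in>set xs. \<forall>y\<in>set xs. blk x = blk y)"
        using RGen_blk[of xs "Suc 1"] unfolding QGen_def by blast
      have "(\<Sum>j\<in>{1..Suc 1}. (-1) ^ (Suc j) *
         (f (take j xs @ drop (Suc j) xs)
          - f (map (\<lambda>x. r4_op x (xs ! j)) (take j xs) @ drop (Suc j) xs))) = 0"
      proof (rule sum.neutral, rule ballI)
        fix j assume "j \<in> {1..Suc 1}"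
        have l: "length xs = Suc (Suc 1)" using r by (rule conjunct1)
        have jl: "j < length xs" using \<open>j \<in> {1..Suc 1}\<close> l by auto
        have m: "map (\<lambda>x. r4_op x (xs ! j)) (take j xs) = take j xs"
          using same_blk_map[of xs j] r jl by blast
        show "(-1) ^ (Suc j) *
         (f (take j xs @ drop (Suc j) xs)
          - f (map (\<lambda>x. r4_op x (xs ! j)) (take j xs) @ drop (Suc j) xs)) = 0"
          by (simp add: m)
      qed
      then show ?thesis unfolding qcobd_def using True by simp
    next
      case False
      then show ?thesis unfolding qcobd_def by simp
    qed
  qed
  then show ?thesis unfolding QCocycles_def by simp
qed

lemma coboundaries1: "QCoboundaries 1 R4_top r4_op = {\<lambda>_. 0}"
proof -
  have z: "qcobd 0 R4_top r4_op f = (\<lambda>_. 0)" for f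
  proof
    fix xs
    show "qcobd 0 R4_top r4_op f xs = 0"
    proof (cases "xs \<in> QGen (Suc 0) R4_top")
      case True
      then have r: "length xs = Suc (Suc 0) \<and> (\<forall>x\<in>set xs. \<forall>y\<in>set xs. blk x = blk y)"
        using RGen_blk[of xs "Suc 0"] unfolding QGen_def by blast
      have l: "length xs = Suc (Suc 0)" using r by (rule conjunct1)
      have "1 < length xs" by (simp add: l)
      then have "map (\<lambda>x. r4_op x (xs!1)) (take 1 xs) = take 1 xs"
        using same_blk_map[of xs 1] r by blast
      then show ?thesis unfolding qcobd_def using True by simp
    next
      case False
      then show ?thesis unfolding qcobd_def by simp
    qed
  qed
  have "(\<lambda>_. 0) \<in> QCochain 0 R4_top" by (simp add: QCochain_def)
  then show ?thesis unfolding QCoboundaries_def using z by auto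
qed

lemma carrier_cg: "carrier (cocycle_group 1 R4_top r4_op) = QCochain 1 R4_top"
  by (simp only: cocycle_group_def cocycles1 partial_object.simps)

lemma mult_cg: "x \<otimes>\<^bsub>cocycle_group 1 R4_top r4_op\<^esub> y = (\<lambda>xs. x xs + y xs)"
  by (simp add: cocycle_group_def)

lemma one_cg: "\<one>\<^bsub>cocycle_group 1 R4_top r4_op\<^esub> = (\<lambda>_. 0)"
  by (simp add: cocycle_group_def)

lemma group_cg: "group (cocycle_group 1 R4_top r4_op)"
proof (rule groupI)
  show "\<one>\<^bsub>cocycle_group 1 R4_top r4_op\<^esub> \<in> carrier (cocycle_group 1 R4_top r4_op)"
    unfolding carrier_cg one_cg by (simp add: QCochain_def)
next
  fix x y assume "x \<in> carrier (cocycle_group 1 R4_top r4_op)" "y \<in> carrier (cocycle_group 1 R4_top r4_op)"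
  then show "x \<otimes>\<^bsub>cocycle_group 1 R4_top r4_op\<^esub> y \<in> carrier (cocycle_group 1 R4_top r4_op)"
    unfolding carrier_cg mult_cg by (simp add: QCochain_def)
next
  fix x y z
  show "x \<otimes>\<^bsub>cocycle_group 1 R4_top r4_op\<^esub> y \<otimes>\<^bsub>cocycle_group 1 R4_top r4_op\<^esub> z =
        x \<otimes>\<^bsub>cocycle_group 1 R4_top r4_op\<^esub> (y \<otimes>\<^bsub>cocycle_group 1 R4_top r4_op\<^esub> z)"
    unfolding mult_cg by (simp add: add.assoc)
next
  fix x show "\<one>\<^bsub>cocycle_group 1 R4_top r4_op\<^esub> \<otimes>\<^bsub>cocycle_group 1 R4_top r4_op\<^esub> x = x"
    unfolding mult_cg one_cg by simp
next
  fix x assume "x \<in> carrier (cocycle_group 1 R4_top r4_op)"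
  then have "(\<lambda>xs. - x xs) \<in> carrier (cocycle_group 1 R4_top r4_op)"
    unfolding carrier_cg by (simp add: QCochain_def)
  moreover have "(\<lambda>xs. - x xs) \<otimes>\<^bsub>cocycle_group 1 R4_top r4_op\<^esub> x = \<one>\<^bsub>cocycle_group 1 R4_top r4_op\<^esub>"
    unfolding mult_cg one_cg by simp
  ultimately show "\<exists>y\<in>carrier (cocycle_group 1 R4_top r4_op). y \<otimes>\<^bsub>cocycle_group 1 R4_top r4_op\<^esub> x = \<one>\<^bsub>cocycle_group 1 R4_top r4_op\<^esub>"
    by blast
qed


definition hmap :: "(nat \<Rightarrow>\<^sub>0 int) \<Rightarrow> r4 list \<Rightarrow> int" where
  "hmap p = (\<lambda>xs. \<Sum>i<(4::nat). if xs = L i then Poly_Mapping.lookup p i else 0)"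

lemma sum4: "(\<Sum>i<(4::nat). g i) = g 0 + g 1 + g 2 + g 3"
  by (simp add: eval_nat_numeral)

lemma hmap_L: "k < 4 \<Longrightarrow> hmap p (L k) = Poly_Mapping.lookup p k"
proof -
  assume "k < 4"
  then have "k = 0 \<or> k = 1 \<or> k = 2 \<or> k = 3" by arith
  then show ?thesis unfolding hmap_def sum4 by (elim disjE; simp add: L_def)
qed

lemma hmap_notL: "xs \<notin> L ` {..<4} \<Longrightarrow> hmap p xs = 0"
  unfolding hmap_def by (rule sum.neutral) auto

lemma hmap_add: "hmap (p + q) = (\<lambda>xs. hmap p xs + hmap q xs)"
  unfolding hmap_def
  apply (rule ext)
  apply (subst sum.distrib[symmetric])
  apply (rule sum.cong)
   apply (simp_all add: lookup_add)
  done

lemma L_inj: "i < 4 \<Longrightarrow> j < 4 \<Longrightarrow> L i = L j \<Longrightarrow> i = j"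
proof -
  assume "i < 4" "j < 4" "L i = L j"
  moreover have "i = 0 \<or> i = 1 \<or> i = 2 \<or> i = 3" using \<open>i < 4\<close> by arith
  moreover have "j = 0 \<or> j = 1 \<or> j = 2 \<or> j = 3" using \<open>j < 4\<close> by arith
  ultimately show "i = j" by (auto simp: L_def)
qed

lemma iso_h: "hmap \<in> iso (free_Abelian_group {..<4}) (cocycle_group 1 R4_top r4_op)"
proof (rule isoI)
  have cl: "hmap p \<in> QCochain 1 R4_top" for p
    unfolding QCochain_def QGen1 using hmap_notL by blast
  show "hmap \<in> hom (free_Abelian_group {..<4}) (cocycle_group 1 R4_top r4_op)"
    unfolding hom_def carrier_cg mult_cg using cl by (simp add: free_Abelian_group_def hmap_add)
  show "bij_betw hmap (carrier (free_Abelian_group {..<4})) (carrier (cocycle_group 1 R4_top r4_op))"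
    unfolding carrier_cg
  proof (rule bij_betw_imageI)
    show "inj_on hmap (carrier (free_Abelian_group {..<4}))"
    proof (rule inj_onI)
      fix p q assume p: "p \<in> carrier (free_Abelian_group {..<4::nat})" and q: "q \<in> carrier (free_Abelian_group {..<4::nat})"
        and e: "hmap p = hmap q"
      show "p = q"
      proof (rule poly_mapping_eqI)
        fix k
        show "Poly_Mapping.lookup p k = Poly_Mapping.lookup q k"
        proof (cases "k < 4")
          case True
          then show ?thesis using e hmap_L by metis
        next
          case False
          then have "k \<notin> Poly_Mapping.keys p" "k \<notin> Poly_Mapping.keys q"
            using p q by (auto simp: free_Abelian_group_def)
          then show ?thesis by (simp add: in_keys_iff)
        qed
      qed
    qed
    show "hmap ` carrier (free_Abelian_group {..<4}) = QCochain 1 R4_top"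
    proof
      show "hmap ` carrier (free_Abelian_group {..<4}) \<subseteq> QCochain 1 R4_top" using cl by blast
    next
      show "QCochain 1 R4_top \<subseteq> hmap ` carrier (free_Abelian_group {..<4})"
      proof
        fix f assume f: "f \<in> QCochain 1 R4_top"
        define g where "g = (\<lambda>i. if i < (4::nat) then f (L i) else 0)"
        have fin: "finite {i. g i \<noteq> 0}"
          by (rule finite_subset[of _ "{..<4}"]) (auto simp: g_def split: if_splits)
        define p where "p = Abs_poly_mapping g"
        have lp: "Poly_Mapping.lookup p = g" unfolding p_def using fin by simp
        have "p \<in> carrier (free_Abelian_group {..<4})"
        proof -
          have "Poly_Mapping.keys p \<subseteq> {..<4}"
          proof
            fix i assume "i \<in> Poly_Mapping.keys p"
            then have "g i \<noteq> 0" by (simp add: in_keys_iff lp)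
            then show "i \<in> {..<4}" unfolding g_def by (cases "i < 4") auto
          qed
          then show ?thesis by (simp add: free_Abelian_group_def)
        qed
        moreover have "hmap p = f"
        proof
          fix xs
          show "hmap p xs = f xs"
          proof (cases "xs \<in> L ` {..<4}")
            case True
            then obtain k where "k < 4" "xs = L k" by auto
            then show ?thesis using hmap_L lp g_def by simp
          next
            case False
            then show ?thesis using f hmap_notL unfolding QCochain_def QGen1 by simp
          qed
        qed
        ultimately show "f \<in> hmap ` carrier (free_Abelian_group {..<4})" by blast
      qed
    qed
  qed
qed

theorem mainTheorem17:
  shows "quandle_cohomology 1 R4_top r4_op \<cong> free_Abelian_group {..<(4::nat)}"
proof -
  have G: "group (cocycle_group 1 R4_top r4_op)" by (rule group_cg)
  have eq: "quandle_cohomology 1 R4_top r4_op = cocycle_group 1 R4_top r4_op Mod {\<one>\<^bsub>cocycle_group 1 R4_top r4_op\<^esub>}"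
    unfolding quandle_cohomology_def coboundaries1 one_cg ..
  have "cocycle_group 1 R4_top r4_op Mod {\<one>\<^bsub>cocycle_group 1 R4_top r4_op\<^esub>} \<cong> cocycle_group 1 R4_top r4_op"
    by (rule is_isoI[OF group.trivial_factor_iso[OF G]])
  moreover have "cocycle_group 1 R4_top r4_op \<cong> free_Abelian_group {..<(4::nat)}"
    by (rule group.iso_sym[OF group_free_Abelian_group is_isoI[OF iso_h]])
  ultimately show ?thesis unfolding eq by (rule iso_trans)
qed

end
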